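(* For every base $\mathcal{B}$, atomic multiset $L$, nonempty finite multiset $\Gamma$ of ILL formulae and ILL formula $\varphi$: $\Gamma\Vdash^L_{\mathcal{B}}\varphi$ if and only if for every base $\mathcal{C}\supseteq\mathcal{B}$ and every atomic multiset $K$, $\Vdash^K_{\mathcal{C}}\Gamma$ implies $\Vdash^{L,K}_{\mathcal{C}}\varphi$.
   Context: Fix a set $\mathbb{A}$ of propositional atoms. ILL formulae: $\phi ::= p\in\mathbb{A} \mid \top \mid 0 \mid 1 \mid \phi\multimap\phi \mid \phi\otimes\phi \mid \phi\,\&\,\phi \mid \phi\oplus\phi \mid\ !\phi$. All multisets are finite; "$\Gamma,\Delta$" denotes multiset union. Atomic rules and bases: an atomic sequent is $P\Rightarrow p$ with $P$ a multiset of atoms, $p$ an atom. An atomic box is a multiset of atomic sequents. An atomic rule is a triple $\langle\mathbf{A},\mathbf{S},p\rangle$ with $\mathbf{A}$ a multiset of atomic boxes, $\mathbf{S}$ an atomic box, $p$ an atom. A base is a set of atomic rules. An atom $p$ is persistent in $\mathcal{B}$ if some $\langle\varnothing,\mathbf{S},p\rangle\in\mathcal{B}$ has $\mathbf{S}\neq\varnothing$. Derivability $\vdash_{\mathcal{B}}$: (Ref) $p\vdash_{\mathcal{B}}p$; (App) if $\langle\mathbf{A},\mathbf{S},p\rangle\in\mathcal{B}$ with $\mathbf{A}=\{\mathbf{T}_1,\dots,\mathbf{T}_m\}$, and there are atomic multisets $C_1,\dots,C_n$ ($n\ge m$) and a multiset $D=\{d_{m+1},\dots,d_n\}$ of atoms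 persistent in $\mathcal{B}$ such that $C_i,Q\vdash_{\mathcal{B}}q$ for every $i\le m$ and every $Q\Rightarrow q\in\mathbf{T}_i$, $C_j\vdash_{\mathcal{B}}d_j$ for every $m<j\le n$, and $D,U\vdash_{\mathcal{B}}v$ for every $U\Rightarrow v\in\mathbf{S}$, then $C_1,\dots,C_n\vdash_{\mathcal{B}}p$. Support $\Vdash^L_{\mathcal{B}}$ (base $\mathcal{B}$, atomic multiset $L$), by induction on formulae: $\Vdash^L_{\mathcal{B}}p$ iff $L\vdash_{\mathcal{B}}p$; $\Vdash^L_{\mathcal{B}}\varphi\multimap\psi$ iff $\varphi\Vdash^L_{\mathcal{B}}\psi$; $\Vdash^L_{\mathcal{B}}\varphi\otimes\psi$ iff for all $\mathcal{C}\supseteq\mathcal{B}$, atomic $K$, atoms $p$: if $\varphi,\psi\Vdash^K_{\mathcal{C}}p$ then $\Vdash^{L,K}_{\mathcal{C}}p$; $\Vdash^L_{\mathcal{B}}1$ iff for all $\mathcal{C}\supseteq\mathcal{B}$, $K$, $p$: if $\Vdash^K_{\mathcal{C}}p$ then $\Vdash^{L,K}_{\mathcal{C}}p$; $\Vdash^L_{\mathcal{B}}\varphi\&\psi$ iff $\Vdash^L_{\mathcal{B}}\varphi$ and $\Vdash^L_{\mathcal{B}}\psi$; $\Vdash^L_{\mathcal{B}}\varphi\oplus\psi$ iff for all $\mathcal{C}\supseteq\mathcal{B}$, $K$, $p$: if $\varphi\Vdash^K_{\mathcal{C}}p$ and $\psi\Vdash^K_{\mathcal{C}}p$ then $\Vdash^{L,K}_{\mathcal{C}}p$;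 $\Vdash^L_{\mathcal{B}}0$ iff $\Vdash^{L,K}_{\mathcal{B}}p$ for all atoms $p$ and atomic $K$; $\Vdash^L_{\mathcal{B}}\top$ always; $\Vdash^L_{\mathcal{B}}!\varphi$ iff for all $\mathcal{C}\supseteq\mathcal{B}$, $K$, $p$: if (for all $\mathcal{D}\supseteq\mathcal{C}$, $\Vdash^{\varnothing}_{\mathcal{D}}\varphi$ implies $\Vdash^K_{\mathcal{D}}p$) then $\Vdash^{L,K}_{\mathcal{C}}p$. For nonempty multisets: $\Vdash^L_{\mathcal{B}}\Gamma,\Delta$ iff $L=K,M$ with $\Vdash^K_{\mathcal{B}}\Gamma$ and $\Vdash^M_{\mathcal{B}}\Delta$. For a nonempty antecedent written $!\Delta,\Theta$, where $!\Delta$ collects the formulae with top-level connective $!$ (with $\Delta$ the formulae under those $!$) and $\Theta$ contains none: $!\Delta,\Theta\Vdash^L_{\mathcal{B}}\varphi$ iff for all $\mathcal{C}\supseteq\mathcal{B}$ and atomic $K$, if $\Vdash^{\varnothing}_{\mathcal{C}}\delta$ for every $\delta\in\Delta$ and $\Vdash^K_{\mathcal{C}}\Theta$ then $\Vdash^{L,K}_{\mathcal{C}}\varphi$ (when $\Theta$ is empty, $K$ is empty). An empty antecedent: $\varnothing\Vdash^L_{\mathcal{B}}\varphi$ means $\Vdash^L_{\mathcal{B}}\varphi$. *)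

theory Defs
  imports Main "HOL-Library.Multiset"
begin

datatype 'a form =
    Atom 'a
  | Top
  | Zero
  | One
  | Imp "'a form" "'a form"
  | Tensor "'a form" "'a form"
  | With "'a form" "'a form"
  | Plus "'a form" "'a form"
  | Bang "'a form"

type_synonym 'a aseq = "'a multiset \<times> 'a"
type_synonym 'a abox = "'a aseq multiset"
type_synonym 'a arule = "'a abox multiset \<times> 'a abox \<times> 'a"
type_synonym 'a base = "'a arule set"

definition persistent :: "'a base \<Rightarrow> 'a \<Rightarrow> bool" where
  "persistent B p \<longleftrightarrow> (\<exists>S. ({#}, S, p) \<in> B \<and> S \<noteq> {#})"

text \<open>Derivability in a base. In rule App, the list Ts enumerates the boxes
  T_1..T_m of A, Cs = [C_1..C_m], and Es = [(C_{m+1},d_{m+1}),..,(C_n,d_n)].\<close>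

inductive deriv :: "'a base \<Rightarrow> 'a multiset \<Rightarrow> 'a \<Rightarrow> bool" for B where
  Ref: "deriv B {#p#} p"
| App: "\<lbrakk> (A, S, p) \<in> B; mset Ts = A; length Cs = length Ts;
          \<forall>i<length Ts. \<forall>Q q. (Q, q) \<in># Ts ! i \<longrightarrow> deriv B (Cs ! i + Q) q;
          \<forall>j<length Es. deriv B (fst (Es ! j)) (snd (Es ! j)) \<and> persistent B (snd (Es ! j));
          \<forall>U v. (U, v) \<in># S \<longrightarrow> deriv B (mset (map snd Es) + U) v \<rbrakk>
        \<Longrightarrow> deriv B (sum_list Cs + sum_list (map fst Es)) p"

abbreviation ante_part ::
  "('a base \<Rightarrow> 'a multiset \<Rightarrow> 'a form \<Rightarrow> bool) \<Rightarrow> 'a base \<Rightarrow> 'a multiset \<Rightarrow> 'a form \<Rightarrow> bool" where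
  "ante_part S C K \<phi> \<equiv> (case \<phi> of Bang \<delta> \<Rightarrow> K = {#} \<and> S C {#} \<delta> | _ \<Rightarrow> S C K \<phi>)"

fun supp :: "'a base \<Rightarrow> 'a multiset \<Rightarrow> 'a form \<Rightarrow> bool" where
  "supp B L (Atom p) = deriv B L p"
| "supp B L (Imp \<phi> \<psi>) =
     (\<forall>C K. B \<subseteq> C \<longrightarrow> ante_part supp C K \<phi> \<longrightarrow> supp C (L + K) \<psi>)"
| "supp B L (Tensor \<phi> \<psi>) =
     (\<forall>C K p. B \<subseteq> C \<longrightarrow>
        (\<forall>C' K'. C \<subseteq> C' \<longrightarrow>
            (\<exists>K1 K2. K' = K1 + K2 \<and> ante_part supp C' K1 \<phi> \<and> ante_part supp C' K2 \<psi>) \<longrightarrow>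
            deriv C' (K + K') p) \<longrightarrow>
        deriv C (L + K) p)"
| "supp B L One = (\<forall>C K p. B \<subseteq> C \<longrightarrow> deriv C K p \<longrightarrow> deriv C (L + K) p)"
| "supp B L (With \<phi> \<psi>) = (supp B L \<phi> \<and> supp B L \<psi>)"
| "supp B L (Plus \<phi> \<psi>) =
     (\<forall>C K p. B \<subseteq> C \<longrightarrow>
        (\<forall>C' K'. C \<subseteq> C' \<longrightarrow> ante_part supp C' K' \<phi> \<longrightarrow> deriv C' (K + K') p) \<longrightarrow>
        (\<forall>C' K'. C \<subseteq> C' \<longrightarrow> ante_part supp C' K' \<psi> \<longrightarrow> deriv C' (K + K') p) \<longrightarrow>
        deriv C (L + K) p)"
| "supp B L Zero = (\<forall>p K. deriv B (L + K) p)"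
| "supp B L Top = True"
| "supp B L (Bang \<phi>) =
     (\<forall>C K p. B \<subseteq> C \<longrightarrow> (\<forall>D. C \<subseteq> D \<longrightarrow> supp D {#} \<phi> \<longrightarrow> deriv D K p) \<longrightarrow>
        deriv C (L + K) p)"

text \<open>Support of a multiset of formulae: L splits as a sum of pieces, one per formula.
  (For the empty multiset this forces L to be empty.)\<close>

definition supp_ms :: "'a base \<Rightarrow> 'a multiset \<Rightarrow> 'a form multiset \<Rightarrow> bool" where
  "supp_ms B L \<Gamma> \<longleftrightarrow> (\<exists>fs Ls. mset fs = \<Gamma> \<and> length Ls = length fs \<and> L = sum_list Ls \<and>
                          (\<forall>i<length fs. supp B (Ls ! i) (fs ! i)))"

definition is_bang :: "'a form \<Rightarrow> bool" where
  "is_bang \<phi> \<longleftrightarrow> (\<exists>\<delta>. \<phi> = Bang \<delta>)"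

text \<open>Support with an antecedent Gamma = !Delta, Theta.\<close>

definition ante_supp :: "'a base \<Rightarrow> 'a multiset \<Rightarrow> 'a form multiset \<Rightarrow> 'a form \<Rightarrow> bool" where
  "ante_supp B L \<Gamma> \<phi> \<longleftrightarrow>
     (if \<Gamma> = {#} then supp B L \<phi>
      else (\<forall>C K. B \<subseteq> C \<longrightarrow>
              (\<forall>\<delta>. Bang \<delta> \<in># \<Gamma> \<longrightarrow> supp C {#} \<delta>) \<longrightarrow>
              (if filter_mset (\<lambda>\<psi>. \<not> is_bang \<psi>) \<Gamma> = {#} then K = {#}
               else supp_ms C K (filter_mset (\<lambda>\<psi>. \<not> is_bang \<psi>) \<Gamma>)) \<longrightarrow>
              supp C (L + K) \<phi>))"

end

theory Submission
  imports Defs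
begin

lemma deriv_mono: "deriv B L p \<Longrightarrow> B \<subseteq> C \<Longrightarrow> deriv C L p"
proof (induction rule: deriv.induct)
  case (Ref p) show ?case by (simp add: deriv.Ref)
next
  case (App A S p Ts Cs Es)
  have pm: "\<And>q. persistent B q \<Longrightarrow> persistent C q"
    using App.prems unfolding persistent_def by blast
  show ?case
    by (rule deriv.App[of A S p C Ts Cs Es]) (use App pm in auto)
qed

lemma supp_mono: "supp B L \<phi> \<Longrightarrow> B \<subseteq> C \<Longrightarrow> supp C L \<phi>"
proof (induction \<phi> arbitrary: B C L)
  case (Atom x) then show ?case by (auto intro: deriv_mono)
next
  case Zero then show ?case by (auto intro: deriv_mono)
next
  case (Imp \<phi>1 \<phi>2) then show ?case by (simp; blast)
next
  case (Tensor \<phi>1 \<phi>2) then show ?case by (simp; blast)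
next
  case One then show ?case by (simp; blast)
next
  case (With \<phi>1 \<phi>2) then show ?case by (simp; blast)
next
  case (Plus \<phi>1 \<phi>2) then show ?case by (simp; blast)
next
  case Top then show ?case by simp
next
  case (Bang \<phi>) then show ?case by (simp; blast)
qed

lemma ante_part_mono: "ante_part supp B L \<phi> \<Longrightarrow> B \<subseteq> C \<Longrightarrow> ante_part supp C L \<phi>"
  by (cases \<phi>) (auto intro: supp_mono deriv_mono)

lemma bang_elim:
  assumes E: "supp C K (Bang \<delta>)"
    and H: "\<forall>D. C \<subseteq> D \<longrightarrow> supp D {#} \<delta> \<longrightarrow> supp D M \<psi>"
  shows "supp C (K + M) \<psi>"
  using E H
proof (induction \<psi> arbitrary: C K M)
  case (Atom x)
  then show ?case by auto
next
  case Top then show ?case by simp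
next
  case Zero
  show ?case
  proof (simp, intro allI)
    fix p N
    have "deriv C (K + (M + N)) p"
      using Zero.prems(1) Zero.prems(2) by auto
    then show "deriv C (K + M + N) p" by (simp add: add.assoc)
  qed
next
  case (With a b)
  then show ?case by auto
next
  case (Imp a b)
  show ?case
  proof (simp, intro allI impI)
    fix C' N assume CC: "C \<subseteq> C'" and ap: "ante_part supp C' N a"
    have E': "supp C' K (Bang \<delta>)" using supp_mono[OF Imp.prems(1) CC] .
    have "\<forall>D. C' \<subseteq> D \<longrightarrow> supp D {#} \<delta> \<longrightarrow> supp D (M + N) b"
    proof (intro allI impI)
      fix D assume "C' \<subseteq> D" "supp D {#} \<delta>"
      then have "supp D M (Imp a b)" using Imp.prems(2) order_trans[OF CC] by blast
      moreover have "ante_part supp D N a" using ante_part_mono[OF ap \<open>C' \<subseteq> D\<close>] .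
      ultimately show "supp D (M + N) b" by auto
    qed
    from Imp.IH(2)[OF E' this] show "supp C' (K + M + N) b" by (simp add: add.assoc)
  qed
next
  case One
  show ?case
  proof (simp, intro allI impI)
    fix C' N p assume CC: "C \<subseteq> C'" and d: "deriv C' N p"
    have "\<forall>D. C' \<subseteq> D \<longrightarrow> supp D {#} \<delta> \<longrightarrow> deriv D (M + N) p"
    proof (intro allI impI)
      fix D assume D: "C' \<subseteq> D" "supp D {#} \<delta>"
      then have "supp D M One" using One.prems(2) order_trans[OF CC] by blast
      moreover have "deriv D N p" using deriv_mono[OF d D(1)] .
      ultimately show "deriv D (M + N) p" by simp
    qed
    then have "deriv C' (K + (M + N)) p" using One.prems(1) CC by auto
    then show "deriv C' (K + M + N) p" by (simp add: add.assoc)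
  qed
next
  case (Tensor a b)
  show ?case
  proof (simp only: supp.simps, intro allI impI)
    fix C' N p assume CC: "C \<subseteq> C'" and h: "\<forall>C'' K'. C' \<subseteq> C'' \<longrightarrow>
            (\<exists>K1 K2. K' = K1 + K2 \<and> ante_part supp C'' K1 a \<and> ante_part supp C'' K2 b) \<longrightarrow>
            deriv C'' (N + K') p"
    have "\<forall>D. C' \<subseteq> D \<longrightarrow> supp D {#} \<delta> \<longrightarrow> deriv D (M + N) p"
    proof (intro allI impI)
      fix D assume D: "C' \<subseteq> D" "supp D {#} \<delta>"
      then have "supp D M (Tensor a b)" using Tensor.prems(2) order_trans[OF CC] by blast
      moreover have "\<forall>C'' K'. D \<subseteq> C'' \<longrightarrow>
            (\<exists>K1 K2. K' = K1 + K2 \<and> ante_part supp C'' K1 a \<and> ante_part supp C'' K2 b) \<longrightarrow>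
            deriv C'' (N + K') p" using h D(1) by blast
      ultimately show "deriv D (M + N) p" by (simp only: supp.simps; blast)
    qed
    then have "deriv C' (K + (M + N)) p" using Tensor.prems(1) CC by auto
    then show "deriv C' (K + M + N) p" by (simp add: add.assoc)
  qed
next
  case (Plus a b)
  show ?case
  proof (simp only: supp.simps, intro allI impI)
    fix C' N p assume CC: "C \<subseteq> C'"
      and h1: "\<forall>C'' K'. C' \<subseteq> C'' \<longrightarrow> ante_part supp C'' K' a \<longrightarrow> deriv C'' (N + K') p"
      and h2: "\<forall>C'' K'. C' \<subseteq> C'' \<longrightarrow> ante_part supp C'' K' b \<longrightarrow> deriv C'' (N + K') p"
    have "\<forall>D. C' \<subseteq> D \<longrightarrow> supp D {#} \<delta> \<longrightarrow> deriv D (M + N) p"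
    proof (intro allI impI)
      fix D assume D: "C' \<subseteq> D" "supp D {#} \<delta>"
      then have "supp D M (Plus a b)" using Plus.prems(2) order_trans[OF CC] by blast
      moreover have "\<forall>C'' K'. D \<subseteq> C'' \<longrightarrow> ante_part supp C'' K' a \<longrightarrow> deriv C'' (N + K') p"
        using h1 D(1) by blast
      moreover have "\<forall>C'' K'. D \<subseteq> C'' \<longrightarrow> ante_part supp C'' K' b \<longrightarrow> deriv C'' (N + K') p"
        using h2 D(1) by blast
      ultimately show "deriv D (M + N) p" by (simp only: supp.simps; blast)
    qed
    then have "deriv C' (K + (M + N)) p" using Plus.prems(1) CC by auto
    then show "deriv C' (K + M + N) p" by (simp add: add.assoc)
  qed
next
  case (Bang a)
  show ?case
  proof (simp only: supp.simps, intro allI impI)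
    fix C' N p assume CC: "C \<subseteq> C'"
      and h: "\<forall>D. C' \<subseteq> D \<longrightarrow> supp D {#} a \<longrightarrow> deriv D N p"
    have "\<forall>D. C' \<subseteq> D \<longrightarrow> supp D {#} \<delta> \<longrightarrow> deriv D (M + N) p"
    proof (intro allI impI)
      fix D assume D: "C' \<subseteq> D" "supp D {#} \<delta>"
      then have "supp D M (Bang a)" using Bang.prems(2) order_trans[OF CC] by blast
      moreover have "\<forall>D'. D \<subseteq> D' \<longrightarrow> supp D' {#} a \<longrightarrow> deriv D' N p"
        using h D(1) by blast
      ultimately show "deriv D (M + N) p" by (simp only: supp.simps; blast)
    qed
    then have "deriv C' (K + (M + N)) p" using Bang.prems(1) CC by auto
    then show "deriv C' (K + M + N) p" by (simp add: add.assoc)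
  qed
qed

lemma bang_intro: "supp C {#} \<delta> \<Longrightarrow> supp C {#} (Bang \<delta>)"
  by (simp; meson order_refl supp_mono)

lemma supp_ms_alt:
  "supp_ms B L \<Gamma> \<longleftrightarrow> (\<exists>xs. mset (map fst xs) = \<Gamma> \<and> L = sum_list (map snd xs) \<and>
                         (\<forall>x\<in>set xs. supp B (snd x) (fst x)))"
proof
  assume "supp_ms B L \<Gamma>"
  then obtain fs Ls where h: "mset fs = \<Gamma>" "length Ls = length fs" "L = sum_list Ls"
    "\<forall>i<length fs. supp B (Ls ! i) (fs ! i)" unfolding supp_ms_def by blast
  show "\<exists>xs. mset (map fst xs) = \<Gamma> \<and> L = sum_list (map snd xs) \<and>
                         (\<forall>x\<in>set xs. supp B (snd x) (fst x))"
  proof (intro exI[of _ "zip fs Ls"] conjI)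
    show "\<forall>x\<in>set (zip fs Ls). supp B (snd x) (fst x)"
      using h(2,4) by (auto simp: set_zip)
  qed (use h in auto)
next
  assume "\<exists>xs. mset (map fst xs) = \<Gamma> \<and> L = sum_list (map snd xs) \<and>
                         (\<forall>x\<in>set xs. supp B (snd x) (fst x))"
  then obtain xs where h: "mset (map fst xs) = \<Gamma>" "L = sum_list (map snd xs)"
    "\<forall>x\<in>set xs. supp B (snd x) (fst x)" by blast
  show "supp_ms B L \<Gamma>" unfolding supp_ms_def
    by (rule exI[of _ "map fst xs"], rule exI[of _ "map snd xs"]) (use h in auto)
qed

lemma supp_ms_mono: "supp_ms B L \<Gamma> \<Longrightarrow> B \<subseteq> C \<Longrightarrow> supp_ms C L \<Gamma>"
  unfolding supp_ms_alt using supp_mono by blast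

lemma main_elim:
  assumes "\<forall>x\<in>set xs. supp C (snd x) (fst x)"
    and "\<forall>D. C \<subseteq> D \<longrightarrow> (\<forall>\<delta>. Bang \<delta> \<in> fst ` set xs \<longrightarrow> supp D {#} \<delta>) \<longrightarrow>
            supp D (M + sum_list (map snd (filter (\<lambda>x. \<not> is_bang (fst x)) xs))) \<psi>"
  shows "supp C (M + sum_list (map snd xs)) \<psi>"
  using assms
proof (induction xs arbitrary: C M)
  case Nil
  then show ?case by auto
next
  case (Cons x xs)
  obtain f l where x: "x = (f, l)" by force
  show ?case
  proof (cases "is_bang f")
    case True
    then obtain \<delta> where f: "f = Bang \<delta>" unfolding is_bang_def by blast
    have E: "supp C l (Bang \<delta>)" using Cons.prems(1) x f by auto
    have "\<forall>D. C \<subseteq> D \<longrightarrow> supp D {#} \<delta> \<longrightarrow> supp D (M + sum_list (map snd xs)) \<psi>"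
    proof (intro allI impI)
      fix D assume D: "C \<subseteq> D" "supp D {#} \<delta>"
      show "supp D (M + sum_list (map snd xs)) \<psi>"
      proof (rule Cons.IH)
        have "\<forall>x\<in>set xs. supp C (snd x) (fst x)" using Cons.prems(1) by simp
        then show "\<forall>x\<in>set xs. supp D (snd x) (fst x)" using D(1) supp_mono by blast
        show "\<forall>Da. D \<subseteq> Da \<longrightarrow> (\<forall>\<delta>. Bang \<delta> \<in> fst ` set xs \<longrightarrow> supp Da {#} \<delta>) \<longrightarrow>
            supp Da (M + sum_list (map snd (filter (\<lambda>x. \<not> is_bang (fst x)) xs))) \<psi>"
        proof (intro allI impI)
          fix Da assume Da: "D \<subseteq> Da" "\<forall>\<delta>. Bang \<delta> \<in> fst ` set xs \<longrightarrow> supp Da {#} \<delta>"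
          have "supp Da {#} \<delta>" using supp_mono[OF D(2) Da(1)] .
          then have "\<forall>\<delta>'. Bang \<delta>' \<in> fst ` set (x # xs) \<longrightarrow> supp Da {#} \<delta>'"
            using Da(2) x f by auto
          moreover have "C \<subseteq> Da" using D Da by blast
          ultimately show "supp Da (M + sum_list (map snd (filter (\<lambda>x. \<not> is_bang (fst x)) xs))) \<psi>"
            using Cons.prems(2) x True by auto
        qed
      qed
    qed
    from bang_elim[OF E this] show ?thesis using x
      by (simp add: ac_simps)
  next
    case False
    have "supp C ((M + l) + sum_list (map snd xs)) \<psi>"
    proof (rule Cons.IH)
      show "\<forall>x\<in>set xs. supp C (snd x) (fst x)" using Cons.prems(1) by auto
      show "\<forall>D. C \<subseteq> D \<longrightarrow> (\<forall>\<delta>. Bang \<delta> \<in> fst ` set xs \<longrightarrow> supp D {#} \<delta>) \<longrightarrow>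
            supp D (M + l + sum_list (map snd (filter (\<lambda>x. \<not> is_bang (fst x)) xs))) \<psi>"
      proof (intro allI impI)
        fix D assume D: "C \<subseteq> D" "\<forall>\<delta>. Bang \<delta> \<in> fst ` set xs \<longrightarrow> supp D {#} \<delta>"
        have "\<forall>\<delta>. Bang \<delta> \<in> fst ` set (x # xs) \<longrightarrow> supp D {#} \<delta>"
          using D(2) x False by (auto simp: is_bang_def)
        then show "supp D (M + l + sum_list (map snd (filter (\<lambda>x. \<not> is_bang (fst x)) xs))) \<psi>"
          using Cons.prems(2) D(1) x False by (auto simp: ac_simps)
      qed
    qed
    then show ?thesis using x by (simp add: ac_simps)
  qed
qed

lemma mset_map_fst_filter:
  "mset (map fst (filter (\<lambda>x. P (fst x)) xs)) = filter_mset P (mset (map fst xs))"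
  by (induction xs) auto

theorem theorem5:
  fixes B :: "'a base" and L :: "'a multiset" and \<Gamma> :: "'a form multiset" and \<phi> :: "'a form"
  assumes "\<Gamma> \<noteq> {#}"
  shows "ante_supp B L \<Gamma> \<phi> \<longleftrightarrow>
         (\<forall>C K. B \<subseteq> C \<longrightarrow> supp_ms C K \<Gamma> \<longrightarrow> supp C (L + K) \<phi>)"
proof
  assume A: "ante_supp B L \<Gamma> \<phi>"
  show "\<forall>C K. B \<subseteq> C \<longrightarrow> supp_ms C K \<Gamma> \<longrightarrow> supp C (L + K) \<phi>"
  proof (intro allI impI)
    fix C K assume BC: "B \<subseteq> C" and s: "supp_ms C K \<Gamma>"
    then obtain xs where xs: "mset (map fst xs) = \<Gamma>" "K = sum_list (map snd xs)"
      "\<forall>x\<in>set xs. supp C (snd x) (fst x)" unfolding supp_ms_alt by blast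
    let ?ys = "filter (\<lambda>x. \<not> is_bang (fst x)) xs"
    have "supp C (L + sum_list (map snd xs)) \<phi>"
    proof (rule main_elim[OF xs(3)], intro allI impI)
      fix D assume D: "C \<subseteq> D" "\<forall>\<delta>. Bang \<delta> \<in> fst ` set xs \<longrightarrow> supp D {#} \<delta>"
      have sG: "set_mset \<Gamma> = fst ` set xs" using xs(1) by (metis set_map set_mset_mset)
      have bangs: "\<forall>\<delta>. Bang \<delta> \<in># \<Gamma> \<longrightarrow> supp D {#} \<delta>"
        using D(2) sG by simp
      have filt: "mset (map fst ?ys) = filter_mset (\<lambda>\<psi>. \<not> is_bang \<psi>) \<Gamma>"
        unfolding xs(1)[symmetric] by (rule mset_map_fst_filter)
      have cond: "(if filter_mset (\<lambda>\<psi>. \<not> is_bang \<psi>) \<Gamma> = {#} then sum_list (map snd ?ys) = {#}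
               else supp_ms D (sum_list (map snd ?ys)) (filter_mset (\<lambda>\<psi>. \<not> is_bang \<psi>) \<Gamma>))"
      proof (cases "filter_mset (\<lambda>\<psi>. \<not> is_bang \<psi>) \<Gamma> = {#}")
        case True
        have "\<forall>x. x \<in># \<Gamma> \<longrightarrow> is_bang x" using True by simp
        then have "?ys = []" using sG by (force simp: filter_empty_conv)
        then show ?thesis using True by simp
      next
        case False
        have "supp_ms D (sum_list (map snd ?ys)) (filter_mset (\<lambda>\<psi>. \<not> is_bang \<psi>) \<Gamma>)"
          unfolding supp_ms_alt
        proof (rule exI[of _ ?ys], intro conjI filt refl ballI)
          fix x assume "x \<in> set ?ys"
          then have "x \<in> set xs" by simp
          then have "supp C (snd x) (fst x)" using xs(3) by blast
          then show "supp D (snd x) (fst x)" using supp_mono D(1) by blast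
        qed
        then show ?thesis by (simp only: if_not_P[OF False])
      qed
      have A': "\<forall>C K. B \<subseteq> C \<longrightarrow> (\<forall>\<delta>. Bang \<delta> \<in># \<Gamma> \<longrightarrow> supp C {#} \<delta>) \<longrightarrow>
              (if filter_mset (\<lambda>\<psi>. \<not> is_bang \<psi>) \<Gamma> = {#} then K = {#}
               else supp_ms C K (filter_mset (\<lambda>\<psi>. \<not> is_bang \<psi>) \<Gamma>)) \<longrightarrow>
              supp C (L + K) \<phi>"
        using A assms unfolding ante_supp_def by simp
      have "B \<subseteq> D" using BC D(1) by blast
      then show "supp D (L + sum_list (map snd ?ys)) \<phi>"
        using mp[OF mp[OF mp[OF A'[THEN spec, THEN spec]] bangs] cond] by blast
    qed
    then show "supp C (L + K) \<phi>" using xs(2) by simp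
  qed
next
  assume R: "\<forall>C K. B \<subseteq> C \<longrightarrow> supp_ms C K \<Gamma> \<longrightarrow> supp C (L + K) \<phi>"
  show "ante_supp B L \<Gamma> \<phi>" unfolding ante_supp_def
  proof (simp only: assms if_False, intro allI impI)
    fix C K assume BC: "B \<subseteq> C" and bangs: "\<forall>\<delta>. Bang \<delta> \<in># \<Gamma> \<longrightarrow> supp C {#} \<delta>"
      and cond: "if filter_mset (\<lambda>\<psi>. \<not> is_bang \<psi>) \<Gamma> = {#} then K = {#}
               else supp_ms C K (filter_mset (\<lambda>\<psi>. \<not> is_bang \<psi>) \<Gamma>)"
    obtain ys where ys: "mset (map fst ys) = filter_mset (\<lambda>\<psi>. \<not> is_bang \<psi>) \<Gamma>"
      "K = sum_list (map snd ys)" "\<forall>x\<in>set ys. supp C (snd x) (fst x)"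
    proof (cases "filter_mset (\<lambda>\<psi>. \<not> is_bang \<psi>) \<Gamma> = {#}")
      case True
      then show ?thesis using cond that[of "[]"] by simp
    next
      case False
      then have "supp_ms C K (filter_mset (\<lambda>\<psi>. \<not> is_bang \<psi>) \<Gamma>)"
        using cond by (simp only: if_not_P[OF False] if_False)
      then show ?thesis using that unfolding supp_ms_alt by blast
    qed
    obtain bl where bl: "mset bl = filter_mset is_bang \<Gamma>" using ex_mset by blast
    let ?xs = "map (\<lambda>f. (f, {#}::'a multiset)) bl @ ys"
    have bsupp: "\<forall>x\<in>set (map (\<lambda>f. (f, {#}::'a multiset)) bl). supp C (snd x) (fst x)"
    proof
      fix x assume "x \<in> set (map (\<lambda>f. (f, {#}::'a multiset)) bl)"
      then obtain f where f: "f \<in> set bl" "x = (f, {#})" by auto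
      then have "f \<in># filter_mset is_bang \<Gamma>" using bl by (metis set_mset_mset)
      then have fG: "f \<in># \<Gamma>" "is_bang f" by auto
      then obtain \<delta> where "f = Bang \<delta>" unfolding is_bang_def by blast
      then have "supp C {#} (Bang \<delta>)" using fG bangs bang_intro by blast
      then show "supp C (snd x) (fst x)" using f \<open>f = Bang \<delta>\<close> by simp
    qed
    have "supp_ms C K \<Gamma>" unfolding supp_ms_alt
    proof (intro exI[of _ ?xs] conjI)
      have "mset (map fst ?xs) = filter_mset is_bang \<Gamma> + filter_mset (\<lambda>\<psi>. \<not> is_bang \<psi>) \<Gamma>"
        using bl ys(1) by (simp add: comp_def)
      then show "mset (map fst ?xs) = \<Gamma>" by (simp add: multiset_partition[symmetric])
      show "K = sum_list (map snd ?xs)" using ys(2) by (simp add: comp_def)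
      show "\<forall>x\<in>set ?xs. supp C (snd x) (fst x)" using bsupp ys(3) by auto
    qed
    then show "supp C (L + K) \<phi>" using R BC by blast
  qed
qed

end
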